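(* Let $s,t\in\mathbb{R}$ with $s\ne0$, $s^2+4t>0$, and suppose $q=\varphi'_{s,t}/\varphi_{s,t}$ satisfies $0<\lvert q\rvert<1$. Let $a,b$ be real numbers, and let $f$ be a function defined on a set containing the points $aq^n,bq^n$ ($n\ge0$), with values in $\mathbb{R}$ or $\mathbb{C}$, such that $\mathbf{D}_{s,t}f\in\mathcal{L}^1_{s,t}[a,b]$. Then: (1) $\displaystyle\int_a^b(\mathbf{D}_{s,t}f)(x)\,d_{s,t}x=\Big[f(b)-\lim_{n\to\infty}f(bq^n)\Big]-\Big[f(a)-\lim_{n\to\infty}f(aq^n)\Big]$, provided these limits exist; (2) if in addition $f$ is continuous at $0$, then $\int_a^b(\mathbf{D}_{s,t}f)(x)\,d_{s,t}x=f(b)-f(a)$.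
   Context: $\varphi_{s,t}=\frac{s+\sqrt{s^2+4t}}{2}$, $\varphi'_{s,t}=\frac{s-\sqrt{s^2+4t}}{2}$. The $(s,t)$-derivative is $(\mathbf{D}_{s,t}f)(x)=\frac{f(\varphi_{s,t}x)-f(\varphi'_{s,t}x)}{(\varphi_{s,t}-\varphi'_{s,t})x}$ for $x\ne0$ and $(\mathbf{D}_{s,t}f)(0)=f'(0)$. For $0<\lvert q\rvert<1$, the $(s,t)$-integral is $\int_a^b g(x)\,d_{s,t}x=(1-q)\sum_{n=0}^\infty\big[bg(bq^n/\varphi_{s,t})-ag(aq^n/\varphi_{s,t})\big]q^n$. $\mathcal{L}^1_{s,t}[a,b]$ is the set of functions $g$ such that $\lvert g\rvert$ is $(s,t)$-integrable on $[a,b]$, i.e. $\int_a^b\lvert g\rvert\,d_{s,t}x<\infty$ (the defining series converges). *)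

theory Defs
  imports "HOL-Analysis.Analysis"
begin

definition st_phi :: "real \<Rightarrow> real \<Rightarrow> real" where
  "st_phi s t = (s + sqrt (s^2 + 4*t)) / 2"

definition st_phi' :: "real \<Rightarrow> real \<Rightarrow> real" where
  "st_phi' s t = (s - sqrt (s^2 + 4*t)) / 2"

definition st_q :: "real \<Rightarrow> real \<Rightarrow> real" where
  "st_q s t = st_phi' s t / st_phi s t"

text \<open>The (s,t)-derivative; functions take real arguments and values in a real normed
  field (covering both real- and complex-valued functions).\<close>
definition st_D :: "real \<Rightarrow> real \<Rightarrow> (real \<Rightarrow> 'a::real_normed_field) \<Rightarrow> real \<Rightarrow> 'a" where
  "st_D s t f x =
     (if x = 0 then vector_derivative f (at 0)
      else (1 / ((st_phi s t - st_phi' s t) * x)) *\<^sub>R (f (st_phi s t * x) - f (st_phi' s t * x)))"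

definition st_integral :: "real \<Rightarrow> real \<Rightarrow> (real \<Rightarrow> 'a::real_normed_vector) \<Rightarrow> real \<Rightarrow> real \<Rightarrow> 'a" where
  "st_integral s t g a b =
     (1 - st_q s t) *\<^sub>R
       (\<Sum>n. (st_q s t ^ n) *\<^sub>R
              (b *\<^sub>R g (b * st_q s t ^ n / st_phi s t) - a *\<^sub>R g (a * st_q s t ^ n / st_phi s t)))"

definition st_L1 :: "real \<Rightarrow> real \<Rightarrow> real \<Rightarrow> real \<Rightarrow> (real \<Rightarrow> 'a::real_normed_vector) \<Rightarrow> bool" where
  "st_L1 s t a b g \<longleftrightarrow>
     summable (\<lambda>n. (1 - st_q s t) * (st_q s t ^ n) *
              (b * norm (g (b * st_q s t ^ n / st_phi s t)) - a * norm (g (a * st_q s t ^ n / st_phi s t))))"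

end

theory Submission
  imports Defs
begin

lemma term_eq:
  fixes f :: "real \<Rightarrow> 'a::real_normed_field"
  assumes p0: "st_phi s t \<noteq> 0" and pp: "st_phi s t - st_phi' s t \<noteq> 0"
    and q0: "st_q s t \<noteq> 0"
  shows "(1 - st_q s t) *\<^sub>R (st_q s t ^ n *\<^sub>R (c *\<^sub>R st_D s t f (c * st_q s t ^ n / st_phi s t)))
         = f (c * st_q s t ^ n) - f (c * st_q s t ^ Suc n)"
proof (cases "c = 0")
  case True then show ?thesis by simp
next
  case False
  define p where "p = st_phi s t"
  define p' where "p' = st_phi' s t"
  define q where "q = st_q s t"
  have qd: "q = p' / p" unfolding q_def p_def p'_def st_q_def by simp
  have p0': "p \<noteq> 0" "p - p' \<noteq> 0" "q \<noteq> 0" using p0 pp q0 by (auto simp: p_def p'_def q_def)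
  define x where "x = c * q ^ n / p"
  have x0: "x \<noteq> 0" using False p0' by (simp add: x_def)
  have px: "p * x = c * q ^ n" using p0' by (simp add: x_def)
  have p'x: "p' * x = c * q ^ Suc n" using p0' by (simp add: x_def qd field_simps)
  have D: "st_D s t f x = (1 / ((p - p') * x)) *\<^sub>R (f (c * q ^ n) - f (c * q ^ Suc n))"
    using x0 px p'x by (simp add: st_D_def p_def p'_def)
  have sc: "(1 - q) * (q ^ n * (c * (1 / ((p - p') * x)))) = 1"
    using p0' False by (simp add: x_def qd field_simps)
  have "(1 - q) *\<^sub>R (q ^ n *\<^sub>R (c *\<^sub>R st_D s t f x))
       = ((1 - q) * (q ^ n * (c * (1 / ((p - p') * x))))) *\<^sub>R (f (c * q ^ n) - f (c * q ^ Suc n))"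
    by (simp add: D)
  also have "\<dots> = f (c * q ^ n) - f (c * q ^ Suc n)" by (simp only: sc scaleR_one)
  finally show ?thesis by (simp add: x_def q_def p_def)
qed

lemma term_sums:
  fixes f :: "real \<Rightarrow> 'a::real_normed_field"
  assumes p0: "st_phi s t \<noteq> 0" and pp: "st_phi s t - st_phi' s t \<noteq> 0"
    and q0: "st_q s t \<noteq> 0" and q1: "st_q s t \<noteq> 1"
    and L: "(\<lambda>n. f (c * st_q s t ^ n)) \<longlonglongrightarrow> L"
  shows "(\<lambda>n. st_q s t ^ n *\<^sub>R (c *\<^sub>R st_D s t f (c * st_q s t ^ n / st_phi s t)))
          sums ((1 / (1 - st_q s t)) *\<^sub>R (f c - L))"
proof -
  have "(\<lambda>n. f (c * st_q s t ^ n) - f (c * st_q s t ^ Suc n)) sums (f (c * st_q s t ^ 0) - L)"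
    by (rule telescope_sums'[OF L])
  hence "(\<lambda>n. (1 / (1 - st_q s t)) *\<^sub>R (f (c * st_q s t ^ n) - f (c * st_q s t ^ Suc n)))
          sums ((1 / (1 - st_q s t)) *\<^sub>R (f c - L))"
    by (intro sums_scaleR_right) simp
  moreover have "\<And>n. (1 / (1 - st_q s t)) *\<^sub>R (f (c * st_q s t ^ n) - f (c * st_q s t ^ Suc n))
     = st_q s t ^ n *\<^sub>R (c *\<^sub>R st_D s t f (c * st_q s t ^ n / st_phi s t))"
  proof -
    fix n
    have "(1 / (1 - st_q s t)) *\<^sub>R (f (c * st_q s t ^ n) - f (c * st_q s t ^ Suc n))
      = (1 / (1 - st_q s t)) *\<^sub>R ((1 - st_q s t) *\<^sub>R (st_q s t ^ n *\<^sub>R (c *\<^sub>R st_D s t f (c * st_q s t ^ n / st_phi s t))))"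
      by (simp only: term_eq[OF p0 pp q0])
    also have "\<dots> = st_q s t ^ n *\<^sub>R (c *\<^sub>R st_D s t f (c * st_q s t ^ n / st_phi s t))"
      using q1 by simp
    finally show "(1 / (1 - st_q s t)) *\<^sub>R (f (c * st_q s t ^ n) - f (c * st_q s t ^ Suc n))
     = st_q s t ^ n *\<^sub>R (c *\<^sub>R st_D s t f (c * st_q s t ^ n / st_phi s t))" .
  qed
  ultimately show ?thesis by simp
qed

theorem mainTheorem6:
  fixes s t a b :: real and f :: "real \<Rightarrow> 'a::real_normed_field"
  assumes "s \<noteq> 0" and "s^2 + 4*t > 0"
    and "0 < \<bar>st_q s t\<bar>" and "\<bar>st_q s t\<bar> < 1"
    and "st_L1 s t a b (st_D s t f)"
  shows "(\<forall>Lb La. (\<lambda>n. f (b * st_q s t ^ n)) \<longlonglongrightarrow> Lb \<longrightarrow>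
                  (\<lambda>n. f (a * st_q s t ^ n)) \<longlonglongrightarrow> La \<longrightarrow>
                  st_integral s t (st_D s t f) a b = (f b - Lb) - (f a - La))
       \<and> (isCont f 0 \<longrightarrow> st_integral s t (st_D s t f) a b = f b - f a)"
proof -
  have q0: "st_q s t \<noteq> 0" and q1: "st_q s t \<noteq> 1" using assms(3,4) by auto
  have p0: "st_phi s t \<noteq> 0" using q0 by (auto simp: st_q_def)
  have pp: "st_phi s t - st_phi' s t \<noteq> 0"
    using assms(2) by (simp add: st_phi_def st_phi'_def)
  have main: "st_integral s t (st_D s t f) a b = (f b - Lb) - (f a - La)"
    if Lb: "(\<lambda>n. f (b * st_q s t ^ n)) \<longlonglongrightarrow> Lb" and La: "(\<lambda>n. f (a * st_q s t ^ n)) \<longlonglongrightarrow> La"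
    for Lb La
  proof -
    have "(\<lambda>n. st_q s t ^ n *\<^sub>R (b *\<^sub>R st_D s t f (b * st_q s t ^ n / st_phi s t))
             - st_q s t ^ n *\<^sub>R (a *\<^sub>R st_D s t f (a * st_q s t ^ n / st_phi s t)))
       sums ((1 / (1 - st_q s t)) *\<^sub>R (f b - Lb) - (1 / (1 - st_q s t)) *\<^sub>R (f a - La))"
      by (intro sums_diff term_sums[OF p0 pp q0 q1] Lb La)
    hence "(\<lambda>n. st_q s t ^ n *\<^sub>R (b *\<^sub>R st_D s t f (b * st_q s t ^ n / st_phi s t)
             - a *\<^sub>R st_D s t f (a * st_q s t ^ n / st_phi s t)))
       sums ((1 / (1 - st_q s t)) *\<^sub>R ((f b - Lb) - (f a - La)))"
      by (simp add: scaleR_diff_right)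
    hence "st_integral s t (st_D s t f) a b = (1 - st_q s t) *\<^sub>R ((1 / (1 - st_q s t)) *\<^sub>R ((f b - Lb) - (f a - La)))"
      unfolding st_integral_def by (simp add: sums_iff)
    also have "\<dots> = (f b - Lb) - (f a - La)" using q1 by simp
    finally show ?thesis .
  qed
  have "isCont f 0 \<longrightarrow> st_integral s t (st_D s t f) a b = f b - f a"
  proof
    assume c: "isCont f 0"
    have lim: "(\<lambda>n. f (c * st_q s t ^ n)) \<longlonglongrightarrow> f 0" for c
    proof -
      have "(\<lambda>n. c * st_q s t ^ n) \<longlonglongrightarrow> c * 0"
        by (intro tendsto_mult tendsto_const LIMSEQ_power_zero) (use assms(4) in auto)
      thus ?thesis using c isCont_tendsto_compose by fastforce
    qed
    show "st_integral s t (st_D s t f) a b = f b - f a" using main[OF lim lim] by simp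
  qed
  thus ?thesis using main by blast
qed

end
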